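(* Let $T=\{0,\dots,N\}$, let $M_\bullet$ and $P_\bullet$ be filtrations of finite-dimensional vector spaces $M=M_N$ and $P=P_N$ over a field $\mathbb{F}$ indexed by $T$, and let $\phi_\bullet\colon M_\bullet\to P_\bullet$ be a morphism of filtrations, i.e. a linear map $\phi\colon M\to P$ with $\phi(M_t)\subseteq P_t$ for all $t$ and $\phi_t=\phi|_{M_t}\colon M_t\to P_t$. Let $\mathfrak{M}$ be a filtration compatible basis for $M_\bullet$, let $\mathfrak{M}'=\mathfrak{M}\cap\ker\phi$, and assume that $\mathfrak{M}''=(\phi(m))_{m\in\mathfrak{M}\setminus\mathfrak{M}'}$ is a linearly independent family of vectors. Then $\mathfrak{M}'$ is a filtration compatible basis for the filtration $\ker\phi_\bullet$ (with $(\ker\phi_\bullet)_t=\ker\phi_t$), and $\mathfrak{M}''$ is a filtration compatible basis for the filtration $\operatorname{im}\phi_\bullet$ (with $(\operatorname{im}\phi_\bullet)_t=\operatorname{im}\phi_t$). Moreover, \[ \operatorname{supp}_{\ker\phi_\bullet}(m')=\operatorname{supp}_{M_\bullet}(m')\quad\text{and}\quad\operatorname{supp}_{\operatorname{im}\phi_\bullet}(\phi(m))=\operatorname{supp}_{M_\bullet}(m) \] for all $m'\in\mathfrak{M}'$ and all $m\in\mathfrak{M}\setminus\mathfrak{M}'$.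
   Context: A filtration of a vector space $M$ indexed by $T=\{0,\dots,N\}$ is a family of subspaces $M_0\subseteq\dots\subseteq M_N=M$, with structure maps the inclusions. For $m\in M$, its support is $\operatorname{supp}_{M_\bullet}(m)=\{t\in T\mid m\in M_t\}$. A basis $\mathfrak{M}$ of $M$ is filtration compatible if $\mathfrak{M}\cap M_t$ is a basis of $M_t$ for every $t\in T$ (for a family of vectors, this is understood in the same way, the family being a basis of $M$). *)

theory Defs
  imports Complex_Main
begin

text \<open>Vector spaces over a field are given by scalar multiplications
  s :: 'a::field => 'v => 'v satisfying the library locale vector_space.
  A filtration indexed by T = {0..N} is a family F :: nat => 'v set of
  subspaces, monotone on {0..N}; the ambient space is F N.\<close>

definition filtration :: "('a::field \<Rightarrow> 'v::ab_group_add \<Rightarrow> 'v) \<Rightarrow> nat \<Rightarrow> (nat \<Rightarrow> 'v set) \<Rightarrow> bool" where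
  "filtration s N F \<longleftrightarrow>
     (\<forall>t\<le>N. module.subspace s (F t)) \<and> (\<forall>t t'. t \<le> t' \<and> t' \<le> N \<longrightarrow> F t \<subseteq> F t')"

definition fin_dim :: "('a::field \<Rightarrow> 'v::ab_group_add \<Rightarrow> 'v) \<Rightarrow> 'v set \<Rightarrow> bool" where
  "fin_dim s V \<longleftrightarrow> (\<exists>B. finite B \<and> B \<subseteq> V \<and> \<not> module.dependent s B \<and> module.span s B = V)"

definition is_basis_of :: "('a::field \<Rightarrow> 'v::ab_group_add \<Rightarrow> 'v) \<Rightarrow> 'v set \<Rightarrow> 'v set \<Rightarrow> bool" where
  "is_basis_of s B V \<longleftrightarrow> B \<subseteq> V \<and> \<not> module.dependent s B \<and> module.span s B = V"

definition filt_compat_basis :: "('a::field \<Rightarrow> 'v::ab_group_add \<Rightarrow> 'v) \<Rightarrow> nat \<Rightarrow> (nat \<Rightarrow> 'v set) \<Rightarrow> 'v set \<Rightarrow> bool" where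
  "filt_compat_basis s N F B \<longleftrightarrow> is_basis_of s B (F N) \<and> (\<forall>t\<le>N. is_basis_of s (B \<inter> F t) (F t))"

definition lin_indep_family :: "('a::field \<Rightarrow> 'v::ab_group_add \<Rightarrow> 'v) \<Rightarrow> 'i set \<Rightarrow> ('i \<Rightarrow> 'v) \<Rightarrow> bool" where
  "lin_indep_family s I v \<longleftrightarrow> inj_on v I \<and> \<not> module.dependent s (v ` I)"

definition is_basis_family_of :: "('a::field \<Rightarrow> 'v::ab_group_add \<Rightarrow> 'v) \<Rightarrow> 'i set \<Rightarrow> ('i \<Rightarrow> 'v) \<Rightarrow> 'v set \<Rightarrow> bool" where
  "is_basis_family_of s I v V \<longleftrightarrow> lin_indep_family s I v \<and> v ` I \<subseteq> V \<and> module.span s (v ` I) = V"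

definition filt_compat_basis_family :: "('a::field \<Rightarrow> 'v::ab_group_add \<Rightarrow> 'v) \<Rightarrow> nat \<Rightarrow> (nat \<Rightarrow> 'v set) \<Rightarrow> 'i set \<Rightarrow> ('i \<Rightarrow> 'v) \<Rightarrow> bool" where
  "filt_compat_basis_family s N F I v \<longleftrightarrow>
     is_basis_family_of s I v (F N) \<and> (\<forall>t\<le>N. is_basis_family_of s {i\<in>I. v i \<in> F t} v (F t))"

definition supp :: "nat \<Rightarrow> (nat \<Rightarrow> 'v set) \<Rightarrow> 'v \<Rightarrow> nat set" where
  "supp N F m = {t. t \<le> N \<and> m \<in> F t}"

definition ker_filt :: "(nat \<Rightarrow> 'v set) \<Rightarrow> ('v \<Rightarrow> 'w::zero) \<Rightarrow> nat \<Rightarrow> 'v set" where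
  "ker_filt F \<phi> t = {m \<in> F t. \<phi> m = 0}"

definition im_filt :: "(nat \<Rightarrow> 'v set) \<Rightarrow> ('v \<Rightarrow> 'w) \<Rightarrow> nat \<Rightarrow> 'w set" where
  "im_filt F \<phi> t = \<phi> ` F t"

end

theory Submission
  imports Defs
begin

theorem lemma2p7:
  fixes sM :: "'a::field \<Rightarrow> 'm::ab_group_add \<Rightarrow> 'm"
    and sP :: "'a \<Rightarrow> 'p::ab_group_add \<Rightarrow> 'p"
    and N :: nat
    and M :: "nat \<Rightarrow> 'm set" and P :: "nat \<Rightarrow> 'p set"
    and \<phi> :: "'m \<Rightarrow> 'p"
    and \<MM> :: "'m set"
  assumes vsM: "vector_space sM" and vsP: "vector_space sP"
    and filtM: "filtration sM N M" and filtP: "filtration sP N P"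
    and fdM: "fin_dim sM (M N)" and fdP: "fin_dim sP (P N)"
    and lin: "Vector_Spaces.linear sM sP \<phi>"
    and morph: "\<forall>t\<le>N. \<phi> ` M t \<subseteq> P t"
    and basis: "filt_compat_basis sM N M \<MM>"
    and indep: "lin_indep_family sP (\<MM> - {m. \<phi> m = 0}) \<phi>"
  shows "filt_compat_basis sM N (ker_filt M \<phi>) (\<MM> \<inter> {m. \<phi> m = 0})
    \<and> filt_compat_basis_family sP N (im_filt M \<phi>) (\<MM> - {m. \<phi> m = 0}) \<phi>
    \<and> (\<forall>m'\<in>\<MM> \<inter> {m. \<phi> m = 0}. supp N (ker_filt M \<phi>) m' = supp N M m')
    \<and> (\<forall>m\<in>\<MM> - {m. \<phi> m = 0}. supp N (im_filt M \<phi>) (\<phi> m) = supp N M m)"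
proof -
  interpret VM: vector_space sM by (rule vsM)
  interpret VP: vector_space sP by (rule vsP)
  interpret L: Vector_Spaces.linear sM sP \<phi> by (rule lin)
  define B where "B = \<MM>"
  define K where "K = \<MM> \<inter> {m. \<phi> m = 0}"
  define R where "R = \<MM> - {m. \<phi> m = 0}"
  have BN: "B \<subseteq> M N" and Bi: "VM.independent B"
    using basis unfolding filt_compat_basis_def is_basis_of_def B_def by auto
  have spt: "\<And>t. t \<le> N \<Longrightarrow> VM.span (B \<inter> M t) = M t"
    using basis unfolding filt_compat_basis_def is_basis_of_def B_def by auto
  have subM: "\<And>t. t \<le> N \<Longrightarrow> VM.subspace (M t)"
    using filtM unfolding filtration_def by auto
  have injR: "inj_on \<phi> R" and iR: "VP.independent (\<phi> ` R)"
    using indep unfolding lin_indep_family_def R_def by auto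
  have decomp: "\<exists>a r. v = a + r \<and> a \<in> VM.span (B \<inter> M t \<inter> K) \<and> r \<in> VM.span (B \<inter> M t \<inter> R)"
    if h: "t \<le> N" "v \<in> M t" for t v
  proof -
    have "B \<inter> M t = (B \<inter> M t \<inter> K) \<union> (B \<inter> M t \<inter> R)"
      unfolding B_def K_def R_def by auto
    then have "v \<in> VM.span ((B \<inter> M t \<inter> K) \<union> (B \<inter> M t \<inter> R))"
      using spt[OF h(1)] h(2) by simp
    then show ?thesis unfolding VM.span_Un by blast
  qed
  have phiK: "\<phi> a = 0" if h: "a \<in> VM.span (B \<inter> M t \<inter> K)" for a t
    by (rule L.eq_0_on_span[OF _ h]) (auto simp: K_def)
  have kerkey: "v \<in> VM.span (B \<inter> M t \<inter> K)" if h: "t \<le> N" "v \<in> M t" "\<phi> v = 0" for t v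
  proof -
    obtain a r where ar: "v = a + r" "a \<in> VM.span (B \<inter> M t \<inter> K)" "r \<in> VM.span (B \<inter> M t \<inter> R)"
      using decomp[OF h(1,2)] by blast
    have "\<phi> r = 0" using ar phiK[OF ar(2)] h(3) L.add by simp
    moreover have "inj_on \<phi> (VM.span (B \<inter> M t \<inter> R))"
      apply (rule L.inj_on_span_independent_image)
      using iR injR VP.independent_mono[OF iR, of "\<phi> ` (B \<inter> M t \<inter> R)"] by (auto intro: inj_on_subset)
    moreover have "0 \<in> VM.span (B \<inter> M t \<inter> R)" by (rule VM.span_zero)
    ultimately have "r = 0" using ar(3) L.zero by (metis inj_onD)
    then show ?thesis using ar by simp
  qed
  have imkey: "m \<in> M t" if h: "t \<le> N" "m \<in> R" "\<phi> m \<in> \<phi> ` M t" for t m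
  proof (rule ccontr)
    assume nm: "m \<notin> M t"
    obtain v where v: "v \<in> M t" "\<phi> m = \<phi> v" using h(3) by auto
    obtain a r where ar: "v = a + r" "a \<in> VM.span (B \<inter> M t \<inter> K)" "r \<in> VM.span (B \<inter> M t \<inter> R)"
      using decomp[OF h(1) v(1)] by blast
    have "\<phi> m = \<phi> r" using v ar phiK[OF ar(2)] L.add by simp
    then have "\<phi> m \<in> VP.span (\<phi> ` (B \<inter> M t \<inter> R))" using ar(3) L.span_image by auto
    moreover have "\<phi> ` (B \<inter> M t \<inter> R) \<subseteq> \<phi> ` R - {\<phi> m}"
    proof
      fix y assume "y \<in> \<phi> ` (B \<inter> M t \<inter> R)"
      then obtain b where b: "b \<in> B \<inter> M t \<inter> R" "y = \<phi> b" by auto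
      have "b \<noteq> m" using b nm by auto
      then have "\<phi> b \<noteq> \<phi> m" using injR b(1) h(2) by (meson IntD2 inj_onD)
      then show "y \<in> \<phi> ` R - {\<phi> m}" using b by auto
    qed
    ultimately have "\<phi> m \<in> VP.span (\<phi> ` R - {\<phi> m})" using VP.span_mono by blast
    then have "VP.dependent (\<phi> ` R)" unfolding VP.dependent_def using h(2) by blast
    then show False using iR by simp
  qed
  have suppim: "supp N (im_filt M \<phi>) (\<phi> m) = supp N M m" if h: "m \<in> R" for m
    unfolding supp_def im_filt_def using imkey[OF _ h] by auto
  have suppker: "supp N (ker_filt M \<phi>) m' = supp N M m'" if h: "m' \<in> K" for m'
    using h unfolding supp_def ker_filt_def K_def by auto
  have kerb: "is_basis_of sM (K \<inter> ker_filt M \<phi> t) (ker_filt M \<phi> t)" if h: "t \<le> N" for t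
  proof -
    have e: "K \<inter> ker_filt M \<phi> t = B \<inter> M t \<inter> K" unfolding K_def B_def ker_filt_def by auto
    have sub: "VM.subspace (ker_filt M \<phi> t)"
    proof -
      have "ker_filt M \<phi> t = M t \<inter> {x. \<phi> x = 0}" unfolding ker_filt_def by auto
      then show ?thesis using VM.subspace_inter[OF subM[OF h] L.subspace_kernel] by simp
    qed
    have "VM.span (B \<inter> M t \<inter> K) = ker_filt M \<phi> t"
    proof (rule VM.span_subspace)
      show "B \<inter> M t \<inter> K \<subseteq> ker_filt M \<phi> t" unfolding ker_filt_def K_def by auto
      show "ker_filt M \<phi> t \<subseteq> VM.span (B \<inter> M t \<inter> K)"
        using kerkey[OF h] unfolding ker_filt_def by auto
    qed (rule sub)
    moreover have "\<not> VM.dependent (B \<inter> M t \<inter> K)" using VM.independent_mono[OF Bi, of "B \<inter> M t \<inter> K"] by auto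
    ultimately show ?thesis unfolding is_basis_of_def e unfolding ker_filt_def K_def by auto
  qed
  have imb: "is_basis_family_of sP {i\<in>R. \<phi> i \<in> im_filt M \<phi> t} \<phi> (im_filt M \<phi> t)" if h: "t \<le> N" for t
  proof -
    have e: "{i\<in>R. \<phi> i \<in> im_filt M \<phi> t} = B \<inter> M t \<inter> R"
      using imkey[OF h] unfolding im_filt_def B_def R_def by auto
    have "VP.span (\<phi> ` (B \<inter> M t \<inter> R)) = \<phi> ` M t"
    proof (rule VP.span_subspace)
      show "\<phi> ` (B \<inter> M t \<inter> R) \<subseteq> \<phi> ` M t" by auto
      show "VP.subspace (\<phi> ` M t)" by (rule L.subspace_image[OF subM[OF h]])
      show "\<phi> ` M t \<subseteq> VP.span (\<phi> ` (B \<inter> M t \<inter> R))"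
      proof
        fix y assume "y \<in> \<phi> ` M t"
        then obtain v where v: "v \<in> M t" "y = \<phi> v" by auto
        obtain a r where ar: "v = a + r" "a \<in> VM.span (B \<inter> M t \<inter> K)" "r \<in> VM.span (B \<inter> M t \<inter> R)"
          using decomp[OF h v(1)] by blast
        have "y = \<phi> r" using v ar phiK[OF ar(2)] L.add by simp
        then show "y \<in> VP.span (\<phi> ` (B \<inter> M t \<inter> R))" using ar(3) L.span_image by auto
      qed
    qed
    moreover have "inj_on \<phi> (B \<inter> M t \<inter> R)" using injR by (auto intro: inj_on_subset)
    moreover have "\<not> VP.dependent (\<phi> ` (B \<inter> M t \<inter> R))"
      using VP.independent_mono[OF iR, of "\<phi> ` (B \<inter> M t \<inter> R)"] by auto
    ultimately show ?thesis unfolding is_basis_family_of_def lin_indep_family_def e unfolding im_filt_def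
      by auto
  qed
  have KN: "K \<inter> ker_filt M \<phi> N = K" using BN unfolding K_def B_def ker_filt_def by auto
  have RN: "{i\<in>R. \<phi> i \<in> im_filt M \<phi> N} = R" using BN unfolding R_def B_def im_filt_def by auto
  have 1: "filt_compat_basis sM N (ker_filt M \<phi>) K"
    unfolding filt_compat_basis_def using kerb kerb[of N] KN by auto
  have 2: "filt_compat_basis_family sP N (im_filt M \<phi>) R \<phi>"
    unfolding filt_compat_basis_family_def using imb imb[of N] RN by auto
  show ?thesis using 1 2 suppim suppker unfolding K_def R_def by blast
qed

end
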